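(* In the setting below, if $C$ is Euclidean LCD, then $l(x)=(x^m-1)/\mathrm{lcm}(g_{11}(x),g_{22}(x))$ is self-reciprocal.
   Context: Let $q$ be a prime power, $F=\mathbb{F}_q$, $m\ge1$ with $\gcd(q,m)=1$, and $R=F[x]/\langle x^m-1\rangle$; elements of $R$ are represented by polynomials of degree $<m$ and identified with their coefficient vectors in $F^m$. A quasi-cyclic code of length $2m$ and index $2$ is an $R$-submodule $C\subseteq R^2$. The Euclidean inner product of $(a_1,a_2),(b_1,b_2)\in R^2$ is the sum of the standard dot products of the coefficient vectors of $a_1,b_1$ and of $a_2,b_2$; $C$ is Euclidean LCD if $C\cap C^{\perp_e}=\{0\}$. For a nonzero polynomial $f$ of degree $k$, $f^*(x)=x^kf(x^{-1})$; $f$ is self-reciprocal if $f^*=\alpha f$ for some $\alpha\in F$. Suppose $C$ is generated as an $R$-module by $(g_{11}(x),g_{12}(x))$ and $(0,g_{22}(x))$, where $g_{11},g_{12},g_{22}\in F[x]$ satisfy: $g_{11}\mid x^m-1$, $g_{22}\mid x^m-1$, $\deg g_{12}<\deg g_{22}$, and $g_{11}g_{22}\mid (x^m-1)g_{12}$. *)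

theory Defs
  imports "HOL-Computational_Algebra.Computational_Algebra"
begin

definition xm1 :: "nat \<Rightarrow> 'a::comm_ring_1 poly" where
  "xm1 m = monom 1 m - 1"

text \<open>Elements of R = F[x]/(x^m-1), represented by polynomials of degree < m
  (equivalently, polynomials fixed by reduction modulo x^m-1).\<close>
definition ring_R :: "nat \<Rightarrow> 'a::field poly set" where
  "ring_R m = {p. p mod xm1 m = p}"

definition qc_code :: "nat \<Rightarrow> 'a::field poly \<Rightarrow> 'a poly \<Rightarrow> 'a poly \<Rightarrow> ('a poly \<times> 'a poly) set" where
  "qc_code m g11 g12 g22 =
     {((a * g11) mod xm1 m, (a * g12 + b * g22) mod xm1 m) | a b. True}"

definition eucl_ip :: "nat \<Rightarrow> ('a::field poly \<times> 'a poly) \<Rightarrow> ('a poly \<times> 'a poly) \<Rightarrow> 'a" where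
  "eucl_ip m u v = (\<Sum>i<m. coeff (fst u) i * coeff (fst v) i) + (\<Sum>i<m. coeff (snd u) i * coeff (snd v) i)"

definition eucl_dual :: "nat \<Rightarrow> ('a::field poly \<times> 'a poly) set \<Rightarrow> ('a poly \<times> 'a poly) set" where
  "eucl_dual m C = {v. v \<in> ring_R m \<times> ring_R m \<and> (\<forall>c\<in>C. eucl_ip m c v = 0)}"

definition euclidean_LCD :: "nat \<Rightarrow> ('a::field poly \<times> 'a poly) set \<Rightarrow> bool" where
  "euclidean_LCD m C \<longleftrightarrow> C \<inter> eucl_dual m C = {(0, 0)}"

text \<open>f^*(x) = x^{deg f} f(1/x) is the library's reflect_poly.\<close>
definition self_reciprocal :: "'a::field poly \<Rightarrow> bool" where
  "self_reciprocal f \<longleftrightarrow> f \<noteq> 0 \<and> (\<exists>\<alpha>. reflect_poly f = smult \<alpha> f)"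

end

theory Submission
  imports Defs "HOL-Number_Theory.Residues"
begin
hide_const (open) UnivPoly.monom UnivPoly.coeff UnivPoly.deg Module.module.smult

lemma dvd_pow_minus_1: "(y - 1) dvd (y ^ t - (1::'a::comm_ring_1))"
proof (induction t)
  case 0 then show ?case by simp
next
  case (Suc t)
  have "y ^ Suc t - 1 = y * (y ^ t - 1) + (y - 1)" by (simp add: algebra_simps)
  then show ?case using Suc by (metis dvd_add dvd_mult dvd_refl)
qed

lemma xm1_dvd_monom_ge:
  assumes "b \<le> a" "a mod m = b mod m"
  shows "xm1 m dvd (monom (c::'a::comm_ring_1) a - monom c b)"
proof -
  obtain t where t: "a = b + m * t"
    using assms by (metis le_add_diff_inverse mod_eq_dvd_iff_nat dvd_def)
  have "monom c a - monom c b = monom c b * ((monom 1 m) ^ t - 1)"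
    by (simp add: t mult_monom monom_power algebra_simps)
  moreover have "xm1 m dvd ((monom 1 m) ^ t - 1)"
    unfolding xm1_def by (rule dvd_pow_minus_1)
  ultimately show ?thesis by (metis dvd_mult)
qed

lemma xm1_dvd_monom:
  assumes "a mod m = b mod m"
  shows "xm1 m dvd (monom (c::'a::comm_ring_1) a - monom c b)"
proof (cases "b \<le> a")
  case True then show ?thesis using assms xm1_dvd_monom_ge by blast
next
  case False
  then have "xm1 m dvd (monom c b - monom c a)" using assms xm1_dvd_monom_ge[of a b m c] by simp
  then show ?thesis by (metis dvd_minus_iff minus_diff_eq)
qed

lemma pcompose_monom: "pcompose (monom (c::'a::comm_ring_1) i) q = smult c (q ^ i)"
  by (induction i) (simp_all add: monom_Suc pcompose_pCons monom_0)

lemma pcompose_monom_sum: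
  fixes f :: "'a::comm_ring_1 poly"
  assumes "degree f \<le> k"
  shows "pcompose f (monom 1 j) = (\<Sum>i\<le>k. monom (coeff f i) (j * i))"
proof -
  have "pcompose f (monom 1 j) = pcompose (\<Sum>i\<le>k. monom (coeff f i) i) (monom 1 j)"
    using poly_as_sum_of_monoms'[OF assms] by simp
  also have "\<dots> = (\<Sum>i\<le>k. monom (coeff f i) (j * i))"
    by (simp add: pcompose_sum pcompose_monom monom_power smult_monom)
  finally show ?thesis .
qed

lemma coeff_rev_sum:
  "coeff (\<Sum>i\<le>k. monom (c i) (k - i)) n = (if n \<le> k then c (k - n) else 0)"
proof -
  have "coeff (\<Sum>i\<le>k. monom (c i) (k - i)) n = (\<Sum>i\<le>k. if i = k - n \<and> n \<le> k then c i else 0)"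
    unfolding coeff_sum by (intro sum.cong) auto
  also have "\<dots> = (if n \<le> k then c (k - n) else 0)"
    by (cases "n \<le> k") (simp_all add: sum.delta)
  finally show ?thesis .
qed

definition barp :: "nat \<Rightarrow> 'a::comm_ring_1 poly \<Rightarrow> 'a poly" where
  "barp m f = pcompose f (monom 1 (m - 1))"

lemma barp_0 [simp]: "barp m 0 = 0"
  by (simp add: barp_def)

lemma barp_uminus: "barp m (- f) = - barp m (f :: 'a::comm_ring_1 poly)"
  by (simp add: barp_def pcompose_uminus)

lemma barp_mult: "barp m (f * g) = barp m f * barp m g"
  by (simp add: barp_def pcompose_mult)

lemma barp_G:
  assumes "degree f \<le> k" "m \<ge> 1"
  shows "xm1 m dvd (monom 1 k * barp m f - (\<Sum>i\<le>k. monom (coeff f i) (k - i)))"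
proof -
  have "monom 1 k * barp m f = (\<Sum>i\<le>k. monom (coeff f i) (k + (m - 1) * i))"
    unfolding barp_def pcompose_monom_sum[OF assms(1)] by (simp add: sum_distrib_left mult_monom)
  then have "monom 1 k * barp m f - (\<Sum>i\<le>k. monom (coeff f i) (k - i))
     = (\<Sum>i\<le>k. monom (coeff f i) (k + (m - 1) * i) - monom (coeff f i) (k - i))"
    by (simp add: sum_subtractf)
  also have "xm1 m dvd \<dots>"
  proof (rule dvd_sum)
    fix i assume "i \<in> {..k}"
    then have ik: "i \<le> k" by simp
    obtain n where n: "m = Suc n" using assms(2) by (cases m) auto
    have "(m - 1) * i = n * i" "i * m = i * n + i" by (simp_all add: n)
    then have "k + (m - 1) * i = (k - i) + i * m" using ik by (simp add: mult.commute)
    then have "(k + (m - 1) * i) mod m = (k - i) mod m" by simp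
    then show "xm1 m dvd monom (coeff f i) (k + (m - 1) * i) - monom (coeff f i) (k - i)"
      by (rule xm1_dvd_monom)
  qed
  finally show ?thesis .
qed

lemma pcompose_H:
  fixes f :: "'a::comm_ring_1 poly"
  assumes "j mod m = 1 mod m"
  shows "xm1 m dvd (pcompose f (monom 1 j) - f)"
proof -
  have "pcompose f (monom 1 j) - f = (\<Sum>i\<le>degree f. monom (coeff f i) (j * i) - monom (coeff f i) i)"
    using pcompose_monom_sum[of f "degree f" j] poly_as_sum_of_monoms[of f]
    by (simp add: sum_subtractf)
  also have "xm1 m dvd \<dots>"
  proof (rule dvd_sum)
    fix i
    have "(j * i) mod m = ((j mod m) * i) mod m" by (simp add: mod_mult_left_eq)
    also have "\<dots> = i mod m" using assms by (simp add: mod_mult_left_eq)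
    finally show "xm1 m dvd monom (coeff f i) (j * i) - monom (coeff f i) i"
      by (rule xm1_dvd_monom)
  qed
  finally show ?thesis .
qed

lemma barp_barp: "m \<ge> 1 \<Longrightarrow> xm1 m dvd (barp m (barp m f) - f)"
proof -
  assume m1: "m \<ge> 1"
  have "barp m (barp m f) = pcompose f (monom 1 ((m - 1) * (m - 1)))"
    by (simp add: barp_def pcompose_assoc[symmetric] pcompose_monom monom_power)
  moreover have "((m - 1) * (m - 1)) mod m = 1 mod m"
  proof (cases "m \<le> 1")
    case True then have "m = 1" using m1 by auto then show ?thesis by simp
  next
    case False
    define n where "n = m - 2"
    have n: "m = Suc (Suc n)" using False by (simp add: n_def)
    have eq: "(m - 1) * (m - 1) = 1 + n * m" by (simp add: n algebra_simps)
    show ?thesis unfolding eq by (rule mod_mult_self1)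
  qed
  ultimately show ?thesis using pcompose_H[of "(m - 1) * (m - 1)" m f] by simp
qed

lemma barp_xm1: "xm1 m dvd barp m (xm1 m)"
proof -
  have eq: "barp m (xm1 m) = (monom 1 m) ^ (m - 1) - 1"
  proof -
    have "barp m (xm1 m) = smult 1 ((monom 1 (m-1))^m) - 1"
      by (simp add: barp_def xm1_def pcompose_diff pcompose_monom pcompose_1)
    also have "\<dots> = (monom 1 m) ^ (m - 1) - 1"
      by (simp add: monom_power) (rule arg_cong[where f="monom 1"], rule mult.commute)
    finally show ?thesis .
  qed
  have "xm1 m dvd (monom 1 m) ^ (m - 1) - 1" unfolding xm1_def by (rule dvd_pow_minus_1)
  then show ?thesis unfolding eq .
qed

lemma barp_mod:
  assumes "xm1 m dvd f - g" shows "xm1 m dvd barp m f - barp m g"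
proof -
  obtain t where "f - g = xm1 m * t" using assms by blast
  then have "barp m f - barp m g = barp m (xm1 m) * barp m t"
    by (metis barp_def barp_mult pcompose_diff)
  then show ?thesis using barp_xm1[of m] by (metis dvd_mult2)
qed

lemma reflect_as_sum: "reflect_poly f = (\<Sum>i\<le>degree f. monom (coeff f i) (degree f - i))"
  by (simp add: poly_eq_iff coeff_rev_sum coeff_reflect_poly)

lemma barp_reflect: "m \<ge> 1 \<Longrightarrow> xm1 m dvd (monom 1 (degree f) * barp m f - reflect_poly f)"
  using barp_G[of f "degree f" m] reflect_as_sum[of f] by simp

definition prp :: "nat \<Rightarrow> 'a::zero poly \<Rightarrow> 'a poly" where
  "prp m v = Poly (rev (map (coeff v) [0..<m]))"

lemma coeff_prp: "coeff (prp m v) k = (if k < m then coeff v (m - 1 - k) else 0)"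
  by (auto simp: prp_def nth_default_def rev_nth)

lemma prp_as_sum: "m \<ge> 1 \<Longrightarrow> prp m f = (\<Sum>i\<le>m-1. monom (coeff f i) (m - 1 - i))"
  by (rule poly_eqI, subst coeff_rev_sum) (auto simp: coeff_prp)

lemma barp_prp:
  assumes "m \<ge> 1" "degree f < m"
  shows "xm1 m dvd (monom 1 (m - 1) * barp m f - prp m f)"
  using barp_G[of f "m - 1" m] prp_as_sum[OF assms(1), of f] assms by simp

lemma degree_prp: "m \<ge> 1 \<Longrightarrow> degree (prp m v) < m"
proof -
  assume "m \<ge> 1"
  have "degree (prp m v) \<le> m - 1" by (rule degree_le) (auto simp: coeff_prp)
  then show ?thesis using \<open>m \<ge> 1\<close> by linarith
qed

lemma prp_prp: "degree v < m \<Longrightarrow> prp m (prp m v) = v"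
  by (auto simp: poly_eq_iff coeff_prp coeff_eq_0)

lemma prp_0 [simp]: "prp m 0 = 0"
  by (simp add: poly_eq_iff coeff_prp)

lemma coeff_mult_prp:
  assumes "m \<ge> 1"
  shows "coeff (p * prp m v) (m - 1) = (\<Sum>i<m. coeff p i * coeff v i)"
proof -
  have "coeff (p * prp m v) (m - 1) = (\<Sum>i\<le>m-1. coeff p i * coeff v i)"
    unfolding coeff_mult using assms by (intro sum.cong) (auto simp: coeff_prp)
  also have "{..m-1} = {..<m}" using assms by auto
  finally show ?thesis by simp
qed

lemma degree_xm1: "m \<ge> 1 \<Longrightarrow> degree (xm1 m :: 'a::comm_ring_1 poly) = m"
  unfolding xm1_def by (subst diff_conv_add_uminus, subst degree_add_eq_left) (auto simp: degree_monom_eq)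

lemma xm1_nz: "m \<ge> 1 \<Longrightarrow> xm1 m \<noteq> (0 :: 'a::comm_ring_1 poly)"
  using degree_xm1[of m] by (metis degree_0 not_one_le_zero)

lemma coeff_xm1_0: "m \<ge> 1 \<Longrightarrow> coeff (xm1 m :: 'a::comm_ring_1 poly) 0 = -1"
  by (simp add: xm1_def)

lemma coeff_mid_zero:
  fixes P :: "'a::idom poly"
  assumes "m \<ge> 1" "degree P < 2 * m - 1" "xm1 m dvd P"
  shows "coeff P (m - 1) = 0"
proof -
  obtain t where t: "P = xm1 m * t" using assms by blast
  show ?thesis
  proof (cases "t = 0")
    case True then show ?thesis by (simp add: t)
  next
    case False
    have "degree P = m + degree t" using t False degree_mult_eq[of "xm1 m" t] xm1_nz[OF assms(1)] degree_xm1[OF assms(1)]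
      by (metis (no_types, lifting) mult_eq_0_iff)
    then have "degree t < m - 1" using assms by linarith
    then have "coeff t (m - 1) = 0" by (simp add: coeff_eq_0)
    moreover have "coeff (monom 1 m * t) (m - 1) = 0" using assms by (simp add: coeff_monom_mult)
    ultimately show ?thesis by (simp add: t xm1_def algebra_simps)
  qed
qed


lemma coeff_mult_0': "coeff (p * q) 0 = coeff p 0 * (coeff q 0 :: 'a::comm_semiring_0)"
  by (simp add: coeff_mult)

lemma dvd_xm1_coeff0:
  assumes "m \<ge> 1" "p dvd xm1 m"
  shows "coeff (p :: 'a::idom poly) 0 \<noteq> 0"
proof
  assume "coeff p 0 = 0"
  obtain q where "xm1 m = p * q" using assms by blast
  then have "coeff (xm1 m :: 'a poly) 0 = 0" using \<open>coeff p 0 = 0\<close> by (simp add: coeff_mult_0')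
  then show False using coeff_xm1_0[OF assms(1), where 'a='a] by simp
qed

lemma R1:
  fixes g d e :: "'a::field poly"
  assumes m: "m \<ge> 1" and dg: "d dvd reflect_poly g" and g0: "coeff g 0 \<noteq> 0" and X: "xm1 m = d * e"
  shows "xm1 m dvd g * barp m e"
proof -
  obtain t where t: "reflect_poly g = d * t" using dg by blast
  have "g = reflect_poly (reflect_poly g)" using g0 by simp
  also have "\<dots> = reflect_poly d * reflect_poly t" unfolding t by (rule reflect_poly_mult)
  finally have g: "g = reflect_poly d * reflect_poly t" .
  define M where "M = (monom 1 (degree d) :: 'a poly)"
  have eq: "g * barp m e = (reflect_poly d - M * barp m d) * (reflect_poly t * barp m e)
     + M * reflect_poly t * barp m (xm1 m)"
    by (simp add: g X barp_mult algebra_simps)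
  have h1: "xm1 m dvd reflect_poly d - M * barp m d"
    using barp_reflect[OF m, of d] unfolding M_def by (simp add: dvd_diff_commute)
  have h2: "xm1 m dvd barp m (xm1 m)" by (rule barp_xm1)
  show ?thesis unfolding eq by (rule dvd_add, rule dvd_mult2[OF h1], rule dvd_mult[OF h2])
qed

lemma N2:
  fixes g d e :: "'a::field poly"
  assumes m: "m \<ge> 1" and X: "xm1 m = d * e" and dv: "xm1 m dvd g * barp m e"
  shows "d dvd reflect_poly g"
proof -
  have "xm1 m dvd barp m (g * barp m e) - barp m 0"
    using barp_mod[of m "g * barp m e" 0] dv by simp
  then have h1: "xm1 m dvd barp m g * barp m (barp m e)" by (simp add: barp_mult)
  have h2: "xm1 m dvd barp m g * (barp m (barp m e) - e)"
    using barp_barp[OF m] by (rule dvd_mult)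
  have eq: "barp m g * e = barp m g * barp m (barp m e) - barp m g * (barp m (barp m e) - e)"
    by (simp add: algebra_simps)
  have "xm1 m dvd barp m g * e" unfolding eq using h1 h2 by (rule dvd_diff)
  then have "d * e dvd barp m g * e" by (simp add: X)
  moreover have "e \<noteq> 0" using X xm1_nz[OF m] by auto
  ultimately have dbg: "d dvd barp m g" by simp
  have dX: "d dvd xm1 m" by (simp add: X)
  have "xm1 m dvd monom 1 (degree g) * barp m g - reflect_poly g" by (rule barp_reflect[OF m])
  then have h3: "d dvd monom 1 (degree g) * barp m g - reflect_poly g" using dX dvd_trans by blast
  have h4: "d dvd monom 1 (degree g) * barp m g" using dbg by simp
  show ?thesis using dvd_diff[OF h4 h3] by simp
qed


lemma degree_mod_xm1:
  assumes "m \<ge> 1" shows "degree (w mod xm1 m :: 'a::field poly) < m"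
  using degree_mod_less[OF xm1_nz[OF assms], of w] degree_xm1[OF assms, where 'a='a] assms
  by (metis degree_0 less_le_trans zero_less_one)

lemma degree_le_m1: "degree (p :: 'a::zero poly) < m \<Longrightarrow> degree p \<le> m - 1"
  by linarith

lemma not_LCD:
  fixes g11 g12 g22 w1 w2 a b :: "'a::field poly"
  assumes m: "m \<ge> 1"
    and o1: "xm1 m dvd g11 * w1 + g12 * w2" and o2: "xm1 m dvd g22 * w2"
    and c1: "xm1 m dvd a * g11 - monom 1 (m - 1) * barp m w1"
    and c2: "xm1 m dvd a * g12 + b * g22 - monom 1 (m - 1) * barp m w2"
    and nz: "w1 mod xm1 m \<noteq> 0 \<or> w2 mod xm1 m \<noteq> 0"
  shows "\<not> euclidean_LCD m (qc_code m g11 g12 g22)"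
proof -
  define X where "X = (xm1 m :: 'a poly)"
  have dX: "degree X = m" unfolding X_def by (rule degree_xm1[OF m])
  define v1 where "v1 = prp m (w1 mod X)"
  define v2 where "v2 = prp m (w2 mod X)"
  have dw: "degree (w mod X) < m" for w unfolding X_def by (rule degree_mod_xm1[OF m])
  have pv1: "prp m v1 = w1 mod X" unfolding v1_def using dw by (rule prp_prp)
  have pv2: "prp m v2 = w2 mod X" unfolding v2_def using dw by (rule prp_prp)
  have vmod: "prp m (w mod X) mod X = prp m (w mod X)" for w
    by (rule mod_poly_less) (simp add: dX degree_prp[OF m])
  have vb: "X dvd prp m (w mod X) - monom 1 (m - 1) * barp m w" for w
  proof -
    have h1: "X dvd monom 1 (m - 1) * barp m (w mod X) - prp m (w mod X)"
      unfolding X_def by (rule barp_prp[OF m dw[unfolded X_def]])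
    have "X dvd (w mod X) - w" by (simp add: mod_eq_dvd_iff[symmetric])
    then have "X dvd barp m (w mod X) - barp m w" unfolding X_def by (rule barp_mod)
    then have h2: "X dvd monom 1 (m - 1) * (barp m (w mod X) - barp m w)" by (rule dvd_mult)
    have eq: "prp m (w mod X) - monom 1 (m - 1) * barp m w = 
       monom 1 (m - 1) * (barp m (w mod X) - barp m w) - (monom 1 (m - 1) * barp m (w mod X) - prp m (w mod X))"
      by (simp add: algebra_simps)
    show ?thesis unfolding eq using h2 h1 by (rule dvd_diff)
  qed
  have inC: "(v1, v2) \<in> qc_code m g11 g12 g22"
  proof -
    have "X dvd a * g11 - v1"
    proof -
      have eq: "a * g11 - v1 = (a * g11 - monom 1 (m - 1) * barp m w1) - (v1 - monom 1 (m - 1) * barp m w1)"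
        by simp
      show ?thesis unfolding eq using c1[folded X_def] vb[of w1, folded v1_def] by (rule dvd_diff)
    qed
    then have e1: "(a * g11) mod X = v1" using vmod[of w1, folded v1_def] by (simp add: mod_eq_dvd_iff[symmetric])
    have "X dvd a * g12 + b * g22 - v2"
    proof -
      have eq: "a * g12 + b * g22 - v2 = (a * g12 + b * g22 - monom 1 (m - 1) * barp m w2) - (v2 - monom 1 (m - 1) * barp m w2)"
        by simp
      show ?thesis unfolding eq using c2[folded X_def] vb[of w2, folded v2_def] by (rule dvd_diff)
    qed
    then have e2: "(a * g12 + b * g22) mod X = v2" using vmod[of w2, folded v2_def] by (simp add: mod_eq_dvd_iff[symmetric])
    show ?thesis unfolding qc_code_def X_def[symmetric] using e1 e2 by blast
  qed
  have inD: "(v1, v2) \<in> eucl_dual m (qc_code m g11 g12 g22)"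
    unfolding eucl_dual_def
  proof (intro CollectI conjI ballI)
    show "(v1, v2) \<in> ring_R m \<times> ring_R m"
      unfolding ring_R_def X_def[symmetric] v1_def v2_def using vmod by simp
  next
    fix c assume "c \<in> qc_code m g11 g12 g22"
    then obtain a' b' where c: "c = ((a' * g11) mod X, (a' * g12 + b' * g22) mod X)"
      unfolding qc_code_def X_def by blast
    define P where "P = (a' * g11) mod X * (w1 mod X) + (a' * g12 + b' * g22) mod X * (w2 mod X)"
    have ip: "eucl_ip m c (v1, v2) = coeff P (m - 1)"
      unfolding eucl_ip_def c P_def by (simp add: coeff_mult_prp[OF m, symmetric] pv1 pv2 coeff_add)
    have "P mod X = ((a' * g11) mod X * (w1 mod X) mod X + (a' * g12 + b' * g22) mod X * (w2 mod X) mod X) mod X"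
      unfolding P_def by (rule mod_add_eq[symmetric])
    also have "\<dots> = ((a' * g11) * w1 mod X + (a' * g12 + b' * g22) * w2 mod X) mod X"
      by (simp only: mod_mult_eq)
    also have "\<dots> = ((a' * g11) * w1 + (a' * g12 + b' * g22) * w2) mod X"
      by (rule mod_add_eq)
    also have "\<dots> = (a' * (g11 * w1 + g12 * w2) + b' * (g22 * w2)) mod X"
      by (simp add: algebra_simps)
    also have "\<dots> = 0" using o1 o2 unfolding X_def[symmetric] by (simp add: dvd_add dvd_mult)
    finally have XP: "X dvd P" by (simp add: mod_eq_0_iff_dvd)
    have dP: "degree P < 2 * m - 1"
    proof -
      have "degree P \<le> (m - 1) + (m - 1)"
        unfolding P_def
        by (intro degree_add_le order.trans[OF degree_mult_le] add_mono degree_le_m1 dw)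
      then show ?thesis using m by linarith
    qed
    show "eucl_ip m c (v1, v2) = 0" unfolding ip
      by (rule coeff_mid_zero[OF m dP XP[unfolded X_def]])
  qed
  have nz': "(v1, v2) \<noteq> (0, 0)"
  proof
    assume "(v1, v2) = (0, 0)"
    then have "w1 mod X = 0" "w2 mod X = 0" using pv1 pv2 by auto
    then show False using nz unfolding X_def by simp
  qed
  show ?thesis unfolding euclidean_LCD_def using inC inD nz' by blast
qed


lemma char_m:
  assumes "coprime (card (UNIV :: 'a::{finite,field} set)) m"
  shows "of_nat m \<noteq> (0::'a)"
proof
  assume "of_nat m = (0::'a)"
  then have "CHAR('a) dvd m" by (simp add: of_nat_eq_0_iff_char_dvd)
  moreover have "CHAR('a) dvd card (UNIV :: 'a set)" by (rule CHAR_dvd_CARD)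
  ultimately have "is_unit CHAR('a)" using assms coprime_common_divisor by blast
  then show False by simp
qed

lemma sqfree:
  fixes h :: "'a::field poly"
  assumes m: "m \<ge> 1" and c: "of_nat m \<noteq> (0::'a)" and hh: "h * h dvd xm1 m"
  shows "is_unit h"
proof -
  obtain t where "xm1 m = h * h * t" using hh by (elim dvdE)
  then have t: "xm1 m = h * (h * t)" by (simp add: mult.assoc)
  have "pderiv (xm1 m :: 'a poly) = h * pderiv (h * t) + (h * t) * pderiv h"
    unfolding t by (rule pderiv_mult)
  then have d1: "h dvd pderiv (xm1 m)" by simp
  have d2: "h dvd xm1 m" using t by simp
  have pd: "pderiv (xm1 m :: 'a poly) = monom (of_nat m) (m - 1)"
    by (simp add: xm1_def pderiv_diff pderiv_monom)
  have "smult (of_nat m) (xm1 m) - monom 1 1 * pderiv (xm1 m) = - [:of_nat m :: 'a:]"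
  proof -
    have mm: "monom 1 1 * monom (of_nat m) (m - 1) = (monom (of_nat m) m :: 'a poly)"
      using m by (simp add: mult_monom)
    show ?thesis unfolding pd mm by (simp add: xm1_def smult_monom smult_diff_right)
  qed
  moreover have "h dvd smult (of_nat m) (xm1 m) - monom 1 1 * pderiv (xm1 m)"
    using d1 d2 by (simp add: dvd_diff dvd_smult)
  ultimately have "h dvd [:- of_nat m :: 'a:]" by simp
  moreover have "is_unit [:- of_nat m :: 'a:]" using c by (simp add: is_unit_const_poly_iff dvd_field_iff)
  ultimately show ?thesis by (rule dvd_unit_imp_unit)
qed


lemma reflect_xm1:
  assumes m: "m \<ge> 1" shows "reflect_poly (xm1 m :: 'a::comm_ring_1 poly) = - xm1 m"
proof (rule poly_eqI)
  fix n
  have d: "degree (xm1 m :: 'a poly) = m" by (rule degree_xm1[OF m])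
  show "coeff (reflect_poly (xm1 m :: 'a poly)) n = coeff (- xm1 m) n"
    unfolding coeff_reflect_poly d using m by (auto simp: xm1_def coeff_1)
qed

theorem lemma3p3:
  fixes g11 g12 g22 :: "'a::{finite,field_gcd} poly" and m :: nat
  assumes "m \<ge> 1"
    and "coprime (card (UNIV :: 'a set)) m"
    and "g11 dvd xm1 m"
    and "g22 dvd xm1 m"
    and "g12 = 0 \<or> degree g12 < degree g22"
    and "g11 * g22 dvd xm1 m * g12"
    and "euclidean_LCD m (qc_code m g11 g12 g22)"
  shows "self_reciprocal (xm1 m div lcm g11 g22)"
proof -
  note m = assms(1)
  define X where "X = (xm1 m :: 'a poly)"
  define L where "L = lcm g11 g22"
  define l where "l = X div L"
  have Xnz: "X \<noteq> 0" unfolding X_def by (rule xm1_nz[OF m])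
  have LX: "L dvd X" unfolding L_def X_def using assms(3,4) by (rule lcm_least)
  have Xl: "X = l * L" unfolding l_def using LX by simp
  have lnz: "l \<noteq> 0" and Lnz: "L \<noteq> 0" using Xl Xnz by auto
  have g11nz: "g11 \<noteq> 0" using assms(3) Xnz X_def by auto
  have g22nz: "g22 \<noteq> 0" using assms(4) Xnz X_def by auto
  have c0: "coeff p 0 \<noteq> 0" if "p dvd X" for p
    using dvd_xm1_coeff0[OF m, of p] that unfolding X_def by simp
  have cm: "of_nat m \<noteq> (0::'a)" by (rule char_m[OF assms(2)])
  have cop: "coprime l g" if "g dvd L" for g
  proof (rule coprimeI)
    fix c assume "c dvd l" "c dvd g"
    then have "c * c dvd l * L" using that by (meson dvd_trans mult_dvd_mono)
    then show "is_unit c" using sqfree[OF m cm, of c] Xl X_def by simp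
  qed
  obtain k where k: "X * g12 = g11 * g22 * k" using assms(6) unfolding X_def by (elim dvdE)
  have setp: "\<exists>e u u2 kk. X = d * e \<and> e = g11 * u \<and> e = g22 * u2 \<and> u * g12 = g22 * kk"
    if dl: "d dvd l" for d
  proof -
    obtain ll where ll: "l = d * ll" using dl by (elim dvdE)
    obtain L1 where L1: "L = g11 * L1" unfolding L_def by (elim dvdE[OF dvd_lcm1])
    obtain L2 where L2: "L = g22 * L2" unfolding L_def by (elim dvdE[OF dvd_lcm2])
    define e where "e = ll * L"
    define u where "u = ll * L1"
    define u2 where "u2 = ll * L2"
    have Xe: "X = d * e" by (simp add: Xl ll e_def mult_ac)
    have eu: "e = g11 * u" by (simp add: e_def u_def L1 mult_ac)
    have eu2: "e = g22 * u2" by (simp add: e_def u2_def L2 mult_ac)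
    have dnz: "d \<noteq> 0" using Xe Xnz by auto
    have "g11 * (d * (u * g12)) = g11 * (g22 * k)"
      using k by (simp add: Xe eu mult_ac)
    then have dk: "d * (u * g12) = g22 * k" using g11nz by simp
    have "coprime d g22" using cop[of g22] dl unfolding L_def
      by (meson coprime_imp_coprime dvd_lcm2 dvd_refl dvd_trans)
    moreover have "d dvd g22 * k" using dk by (metis dvd_triv_left)
    ultimately have "d dvd k" by (simp add: coprime_dvd_mult_right_iff)
    then obtain kk where kk: "k = d * kk" by (elim dvdE)
    have "u * g12 = g22 * kk" using dk dnz by (simp add: kk mult_ac)
    then show ?thesis using Xe eu eu2 by blast
  qed
  define M where "M = (monom 1 (m - 1) :: 'a poly)"
  have bb: "X dvd e - barp m (barp m e)" for e
    using barp_barp[OF m, of e] unfolding X_def by (simp add: dvd_diff_commute)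
  have A: "coprime l (reflect_poly g11)"
  proof (rule ccontr)
    assume nc: "\<not> coprime l (reflect_poly g11)"
    define d where "d = gcd l (reflect_poly g11)"
    have dnu: "\<not> is_unit d" unfolding d_def is_unit_gcd by (rule nc)
    have dl: "d dvd l" and dr: "d dvd reflect_poly g11" unfolding d_def by auto
    obtain e u u2 kk where Xe: "X = d * e" and eu: "e = g11 * u" and eu2: "e = g22 * u2"
      and uk: "u * g12 = g22 * kk" using setp[OF dl] by blast
    have o1: "xm1 m dvd g11 * barp m e + g12 * 0"
      using R1[OF m dr c0[OF assms(3)[folded X_def]] Xe[unfolded X_def]] by simp
    have o2: "xm1 m dvd g22 * 0" by simp
    have c1: "xm1 m dvd (M * u) * g11 - monom 1 (m - 1) * barp m (barp m e)"
    proof -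
      have "(M * u) * g11 - monom 1 (m - 1) * barp m (barp m e) = M * (e - barp m (barp m e))"
        by (simp add: M_def eu algebra_simps)
      then show ?thesis using bb[of e] unfolding X_def by (simp add: dvd_mult)
    qed
    have c2: "xm1 m dvd (M * u) * g12 + (- (M * kk)) * g22 - monom 1 (m - 1) * barp m 0"
    proof -
      have "(M * u) * g12 + (- (M * kk)) * g22 - monom 1 (m - 1) * barp m 0 = M * (u * g12) - M * (g22 * kk)"
        by (simp add: algebra_simps)
      also have "\<dots> = 0" unfolding uk by simp
      finally have eq0: "(M * u) * g12 + (- (M * kk)) * g22 - monom 1 (m - 1) * barp m 0 = 0" .
      show ?thesis by (simp only: eq0 dvd_0_right)
    qed
    have nz: "barp m e mod xm1 m \<noteq> 0 \<or> 0 mod xm1 m \<noteq> (0 :: 'a poly)"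
    proof (rule disjI1, rule notI)
      assume "barp m e mod xm1 m = 0"
      then have "xm1 m dvd 1 * barp m e" by (simp add: mod_eq_0_iff_dvd)
      then have "d dvd reflect_poly 1" using N2[OF m Xe[unfolded X_def]] by blast
      then show False using dnu by simp
    qed
    show False using not_LCD[OF m o1 o2 c1 c2 nz] assms(7) by simp
  qed
  have B: "coprime l (reflect_poly g22)"
  proof (rule ccontr)
    assume nc: "\<not> coprime l (reflect_poly g22)"
    define d where "d = gcd l (reflect_poly g22)"
    have dnu: "\<not> is_unit d" unfolding d_def is_unit_gcd by (rule nc)
    have dl: "d dvd l" and dr: "d dvd reflect_poly g22" unfolding d_def by auto
    obtain e u u2 kk where Xe: "X = d * e" and eu: "e = g11 * u" and eu2: "e = g22 * u2"
      and uk: "u * g12 = g22 * kk" using setp[OF dl] by blast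
    have R: "xm1 m dvd g22 * barp m e"
      using R1[OF m dr c0[OF assms(4)[folded X_def]] Xe[unfolded X_def]] by simp
    define w1 where "w1 = g12 * barp m e"
    define w2 where "w2 = - (g11 * barp m e)"
    have o1: "xm1 m dvd g11 * w1 + g12 * w2" by (simp add: w1_def w2_def)
    have o2: "xm1 m dvd g22 * w2"
    proof -
      have "g22 * w2 = - g11 * (g22 * barp m e)" by (simp add: w2_def algebra_simps)
      then show ?thesis using R by (simp add: dvd_mult)
    qed
    define a where "a = M * barp m g12 * u"
    define b where "b = - (M * (barp m g12 * kk + barp m g11 * u2))"
    have c1: "xm1 m dvd a * g11 - monom 1 (m - 1) * barp m w1"
    proof -
      have "a * g11 - monom 1 (m - 1) * barp m w1 = (M * barp m g12) * (e - barp m (barp m e))"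
        by (simp add: a_def w1_def M_def eu barp_mult algebra_simps)
      then show ?thesis using bb[of e] unfolding X_def by (simp add: dvd_mult)
    qed
    have c2: "xm1 m dvd a * g12 + b * g22 - monom 1 (m - 1) * barp m w2"
    proof -
      have "a * g12 + b * g22 - monom 1 (m - 1) * barp m w2
          = M * barp m g12 * (u * g12) - M * barp m g12 * kk * g22 - M * barp m g11 * (g22 * u2)
            + M * barp m g11 * barp m (barp m e)"
        by (simp add: a_def b_def w2_def M_def barp_mult barp_uminus algebra_simps)
      also have "\<dots> = (M * barp m g11) * (barp m (barp m e) - e)"
        unfolding uk eu2[symmetric] by (simp add: algebra_simps)
      finally have eq: "a * g12 + b * g22 - monom 1 (m - 1) * barp m w2 = (M * barp m g11) * (barp m (barp m e) - e)" .
      have "X dvd barp m (barp m e) - e" using bb[of e] by (simp add: dvd_diff_commute)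
      then show ?thesis unfolding eq X_def by (simp add: dvd_mult)
    qed
    have nz: "w1 mod xm1 m \<noteq> 0 \<or> w2 mod xm1 m \<noteq> 0"
    proof (rule disjI2, rule notI)
      assume "w2 mod xm1 m = 0"
      then have "xm1 m dvd - (g11 * barp m e)" unfolding w2_def by (simp add: mod_eq_0_iff_dvd)
      then have "xm1 m dvd g11 * barp m e" by simp
      then have "d dvd reflect_poly g11" using N2[OF m Xe[unfolded X_def]] by blast
      then have "is_unit d" using A dl by (meson coprime_common_divisor)
      then show False using dnu by simp
    qed
    show False using not_LCD[OF m o1 o2 c1 c2 nz] assms(7) by simp
  qed
  define G where "G = g11 * g22"
  have Gnz: "G \<noteq> 0" using g11nz g22nz G_def by simp
  have G0: "coeff G 0 \<noteq> 0" using c0[OF assms(3)[folded X_def]] c0[OF assms(4)[folded X_def]]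
    by (simp add: G_def coeff_mult_0')
  have l0: "coeff l 0 \<noteq> 0" using c0 Xl by simp
  have copG: "coprime l (reflect_poly G)" using A B by (simp add: G_def reflect_poly_mult)
  have cop2: "coprime (reflect_poly l) G"
  proof (rule coprimeI)
    fix h assume h1: "h dvd reflect_poly l" and h2: "h dvd G"
    obtain q where q: "G = h * q" using h2 by (elim dvdE)
    have h0: "coeff h 0 \<noteq> 0" using G0 by (simp add: q coeff_mult_0')
    have hnz: "h \<noteq> 0" using Gnz q by auto
    have "reflect_poly h dvd reflect_poly (reflect_poly l)" using h1 by (metis dvdE dvdI reflect_poly_mult)
    then have r1: "reflect_poly h dvd l" using l0 by simp
    have r2: "reflect_poly h dvd reflect_poly G" using h2 by (metis dvdE dvdI reflect_poly_mult)
    have "is_unit (reflect_poly h)" using copG r1 r2 by (meson coprime_common_divisor)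
    moreover have "reflect_poly h \<noteq> 0" using hnz by simp
    ultimately have "degree (reflect_poly h) = 0" using is_unit_iff_degree by blast
    then have "degree h = 0" using h0 by simp
    then show "is_unit h" using hnz by (simp add: is_unit_iff_degree)
  qed
  have "reflect_poly X = reflect_poly l * reflect_poly L" using Xl by (simp add: reflect_poly_mult)
  then have "reflect_poly l dvd - X" using reflect_xm1[OF m] X_def by (metis dvdI)
  then have rX: "reflect_poly l dvd X" by simp
  have "L dvd G" unfolding L_def G_def by (simp add: lcm_least)
  then have "X dvd l * G" using Xl by simp
  then have "reflect_poly l dvd l * G" using rX dvd_trans by blast
  then have "reflect_poly l dvd l" using cop2 by (simp add: coprime_dvd_mult_left_iff)
  then obtain t where t: "l = reflect_poly l * t" by (elim dvdE)
  have tnz: "t \<noteq> 0" using t lnz by auto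
  have "degree l = degree l + degree t" using t tnz lnz l0
    by (metis degree_mult_eq degree_reflect_poly_eq reflect_poly_eq_0_iff)
  then have "degree t = 0" by simp
  then obtain c where c: "t = [:c:]" by (metis degree_eq_zeroE)
  have cnz: "c \<noteq> 0" using c tnz by simp
  have "l = smult c (reflect_poly l)" using t c by simp
  then have "smult (1 / c) l = smult (1 / c) (smult c (reflect_poly l))" by (rule arg_cong)
  then have "smult (1 / c) l = reflect_poly l" using cnz by (simp add: smult_smult)
  then have "reflect_poly l = smult (1 / c) l" by simp
  then show ?thesis unfolding self_reciprocal_def using lnz l_def X_def L_def by blast
qed

end
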